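(* Let $k\ge2$ and let $C_{3k}$ be the cycle on $3k$ vertices. Then $i\gamma(C_{3k})=k$, so $|V(C_{3k})|-i\gamma(C_{3k})=2k$. Moreover, if $M\subseteq V(C_{3k})$ is a set of $2k$ vertices inducing a matching of size $k$ in $C_{3k}$, then $M$ is a cover of $C_{3k}$, and for $W_1=\dots=W_{2k-1}=M$ there is no cover $W=\{w_{i_1},\dots,w_{i_t}\}$ of $C_{3k}$ with $1\le i_1<\dots<i_t\le 2k-1$ and $w_{i_j}\in W_{i_j}$ for all $j$.
   Context: A cover of a graph is a vertex set containing at least one endpoint of every edge. $\gamma(G;A)$ is the minimum size of a set $D$ such that every vertex of $A$ has a neighbor in $D$; $i\gamma(G)=\max\{\gamma(G;I): I\text{ an independent set of }G\}$. *)

theory Defs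
  imports Main
begin

text \<open>Finite simple graphs are given by a vertex set V and a symmetric,
irreflexive adjacency relation E.\<close>

definition is_cover :: "'a set \<Rightarrow> ('a \<Rightarrow> 'a \<Rightarrow> bool) \<Rightarrow> 'a set \<Rightarrow> bool" where
  "is_cover V E C \<longleftrightarrow> C \<subseteq> V \<and> (\<forall>u\<in>V. \<forall>v\<in>V. E u v \<longrightarrow> u \<in> C \<or> v \<in> C)"

definition independent :: "'a set \<Rightarrow> ('a \<Rightarrow> 'a \<Rightarrow> bool) \<Rightarrow> 'a set \<Rightarrow> bool" where
  "independent V E I \<longleftrightarrow> I \<subseteq> V \<and> (\<forall>u\<in>I. \<forall>v\<in>I. \<not> E u v)"

definition gamma_dom :: "'a set \<Rightarrow> ('a \<Rightarrow> 'a \<Rightarrow> bool) \<Rightarrow> 'a set \<Rightarrow> nat" where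
  "gamma_dom V E A = (LEAST m. \<exists>D. D \<subseteq> V \<and> card D = m \<and> (\<forall>a\<in>A. \<exists>d\<in>D. E a d))"

definition igamma :: "'a set \<Rightarrow> ('a \<Rightarrow> 'a \<Rightarrow> bool) \<Rightarrow> nat" where
  "igamma V E = Max {gamma_dom V E I | I. independent V E I}"

definition cycle_V :: "nat \<Rightarrow> nat set" where
  "cycle_V n = {0..<n}"

definition cycle_E :: "nat \<Rightarrow> nat \<Rightarrow> nat \<Rightarrow> bool" where
  "cycle_E n i j \<longleftrightarrow> i < n \<and> j < n \<and> (j = (i + 1) mod n \<or> i = (j + 1) mod n)"

definition induced_edges :: "('a \<Rightarrow> 'a \<Rightarrow> bool) \<Rightarrow> 'a set \<Rightarrow> 'a set set" where
  "induced_edges E M = {{u, v} | u v. u \<in> M \<and> v \<in> M \<and> E u v}"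

definition induces_matching :: "'a set \<Rightarrow> ('a \<Rightarrow> 'a \<Rightarrow> bool) \<Rightarrow> 'a set \<Rightarrow> nat \<Rightarrow> bool" where
  "induces_matching V E M k \<longleftrightarrow> M \<subseteq> V \<and>
     (\<forall>e\<in>induced_edges E M. \<forall>e'\<in>induced_edges E M. e \<noteq> e' \<longrightarrow> e \<inter> e' = {}) \<and>
     card (induced_edges E M) = k"

end

theory Submission
  imports Defs
begin

lemma cE: "cycle_E n a b \<longleftrightarrow> a<n \<and> b<n \<and> (b = (if a+1=n then 0 else a+1) \<or> a = (if b+1=n then 0 else b+1))"
proof (cases "a < n \<and> b < n")
  case True
  then have "(a+1) mod n = (if a+1=n then 0 else a+1)" "(b+1) mod n = (if b+1=n then 0 else b+1)"
    by auto
  then show ?thesis using True unfolding cycle_E_def by simp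
qed (auto simp: cycle_E_def)

lemma upper:
  assumes I: "independent (cycle_V (3*k)) (cycle_E (3*k)) I"
  shows "gamma_dom (cycle_V (3*k)) (cycle_E (3*k)) I \<le> k"
proof -
  define D where "D = (\<lambda>j. if 3*j+1 \<in> I then 3*j else 3*j+1) ` {0..<k}"
  have DV: "D \<subseteq> cycle_V (3*k)" unfolding D_def cycle_V_def by auto
  have cD: "card D \<le> k" unfolding D_def by (rule order_trans[OF card_image_le]) auto
  have dom: "\<forall>a\<in>I. \<exists>d\<in>D. cycle_E (3*k) a d"
  proof
    fix a assume aI: "a \<in> I"
    have an: "a < 3*k" using aI I unfolding independent_def cycle_V_def by auto
    define j where "j = a div 3"
    have jk: "j < k" using an unfolding j_def by auto
    have ja: "a = 3*j + a mod 3" unfolding j_def by auto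
    show "\<exists>d\<in>D. cycle_E (3*k) a d"
    proof (cases "a mod 3 = 1")
      case r: True
      have "3*j \<in> D" unfolding D_def using jk ja r aI by (auto intro!: image_eqI[where x=j])
      moreover have "cycle_E (3*k) a (3*j)" unfolding cE using ja r jk by auto
      ultimately show ?thesis by blast
    next
      case False
      then have r: "a mod 3 = 0 \<or> a mod 3 = 2" by auto
      have adj: "cycle_E (3*k) a (3*j+1)" unfolding cE using ja r jk by auto
      have "3*j+1 \<notin> I"
      proof
        assume "3*j+1 \<in> I"
        with aI I adj show False unfolding independent_def by blast
      qed
      then have "3*j+1 \<in> D" unfolding D_def using jk by (auto intro!: image_eqI[where x=j])
      with adj show ?thesis by blast
    qed
  qed
  have "gamma_dom (cycle_V (3*k)) (cycle_E (3*k)) I \<le> card D"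
    unfolding gamma_dom_def using DV dom by (intro Least_le) blast
  with cD show ?thesis by simp
qed

lemma lower:
  assumes k: "k \<ge> 2"
  defines "I3 \<equiv> (\<lambda>i. 3*i) ` {0..<k}"
  shows "independent (cycle_V (3*k)) (cycle_E (3*k)) I3"
    and "gamma_dom (cycle_V (3*k)) (cycle_E (3*k)) I3 \<ge> k"
proof -
  show "independent (cycle_V (3*k)) (cycle_E (3*k)) I3"
    unfolding independent_def I3_def cycle_V_def cE by auto presburger+
  let ?P = "\<lambda>m. \<exists>D. D \<subseteq> cycle_V (3*k) \<and> card D = m \<and> (\<forall>a\<in>I3. \<exists>d\<in>D. cycle_E (3*k) a d)"
  have ex: "?P (card (cycle_V (3*k)))"
  proof (intro exI conjI)
    show "\<forall>a\<in>I3. \<exists>d\<in>cycle_V (3*k). cycle_E (3*k) a d"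
    proof
      fix a assume "a \<in> I3"
      then obtain i where i: "i<k" "a = 3*i" unfolding I3_def by auto
      then have "3*i+1 \<in> cycle_V (3*k)" "cycle_E (3*k) a (3*i+1)" unfolding cycle_V_def cE by auto
      then show "\<exists>d\<in>cycle_V (3*k). cycle_E (3*k) a d" by blast
    qed
  qed auto
  have "?P (LEAST m. ?P m)" by (rule LeastI_ex) (use ex in blast)
  then obtain D where
    D: "D \<subseteq> cycle_V (3*k)" "card D = (LEAST m. ?P m)" "\<forall>a\<in>I3. \<exists>d\<in>D. cycle_E (3*k) a d" by blast
  from D(3) obtain g where g: "\<forall>a\<in>I3. g a \<in> D \<and> cycle_E (3*k) a (g a)" by metis
  have inj: "inj_on g I3"
  proof
    fix a b assume a: "a \<in> I3" and b: "b \<in> I3" and e: "g a = g b"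
    from a obtain i where i: "i<k" "a = 3*i" unfolding I3_def by auto
    from b obtain j where j: "j<k" "b = 3*j" unfolding I3_def by auto
    have "cycle_E (3*k) (3*i) (g a)" "cycle_E (3*k) (3*j) (g a)" using g a b e i j by auto
    then have "i = j" unfolding cE using i j by (auto split: if_splits; presburger)
    then show "a = b" using i j by simp
  qed
  have fin: "finite D" using D(1) finite_subset unfolding cycle_V_def by blast
  have "card I3 = k" unfolding I3_def by (simp add: card_image inj_on_def)
  moreover have "card I3 \<le> card D" using card_inj_on_le[OF inj _ fin] g by blast
  ultimately show "gamma_dom (cycle_V (3*k)) (cycle_E (3*k)) I3 \<ge> k"
    using D(2) unfolding gamma_dom_def by simp
qed

lemma igam:
  assumes k: "k \<ge> 2"
  shows "igamma (cycle_V (3*k)) (cycle_E (3*k)) = k"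
proof -
  let ?S = "{gamma_dom (cycle_V (3*k)) (cycle_E (3*k)) I | I. independent (cycle_V (3*k)) (cycle_E (3*k)) I}"
  have sub: "?S \<subseteq> {..k}" using upper by auto
  have fin: "finite ?S" using finite_subset[OF sub] by simp
  have "gamma_dom (cycle_V (3*k)) (cycle_E (3*k)) ((\<lambda>i. 3*i) ` {0..<k}) = k"
    using lower[OF k] upper[OF lower(1)[OF k]] by (meson le_antisym)
  then have "k \<in> ?S" using lower(1)[OF k] by (auto intro!: exI[where x="(\<lambda>i. 3*i) ` {0..<k}"])
  then show ?thesis unfolding igamma_def using fin sub by (intro Max_eqI) auto
qed

lemma matching_part:
  assumes k: "k \<ge> 2"
    and MV: "M \<subseteq> cycle_V (3*k)" and cM: "card M = 2*k"
    and im: "induces_matching (cycle_V (3*k)) (cycle_E (3*k)) M k"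
  shows "is_cover (cycle_V (3*k)) (cycle_E (3*k)) M
          \<and> (\<forall>W :: nat \<Rightarrow> nat set. (\<forall>i\<in>{1..2*k-1}. W i = M) \<longrightarrow>
               \<not> (\<exists>S f. S \<subseteq> {1..2*k-1} \<and> (\<forall>i\<in>S. f i \<in> W i)
                        \<and> is_cover (cycle_V (3*k)) (cycle_E (3*k)) (f ` S)))"
proof -
  define n where "n = 3*k"
  define s where "s = (\<lambda>a::nat. if a+1 = n then 0 else a+1)"
  have n3: "n \<ge> 6" using k unfolding n_def by simp
  have E: "\<And>a b. cycle_E n a b \<longleftrightarrow> a<n \<and> b<n \<and> (b = s a \<or> a = s b)"
    unfolding cE s_def by simp
  have sV: "\<And>a. a < n \<Longrightarrow> s a < n" unfolding s_def by auto
  have sinj: "\<And>a b. a < n \<Longrightarrow> b < n \<Longrightarrow> s a = s b \<Longrightarrow> a = b"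
    unfolding s_def by (auto split: if_splits)
  have sne: "\<And>a. a < n \<Longrightarrow> s a \<noteq> a" using n3 unfolding s_def by auto
  have ss: "\<And>a. a < n \<Longrightarrow> s (s a) \<noteq> a" using n3 unfolding s_def by (cases "a+1 = n") auto
  have MV': "\<And>m. m \<in> M \<Longrightarrow> m < n" using MV unfolding cycle_V_def n_def by auto
  have disj: "\<And>e e'. e \<in> induced_edges (cycle_E n) M \<Longrightarrow> e' \<in> induced_edges (cycle_E n) M \<Longrightarrow> e \<noteq> e' \<Longrightarrow> e \<inter> e' = {}"
    using im unfolding induces_matching_def n_def by blast
  have uniq: "\<And>m x y. m \<in> M \<Longrightarrow> x \<in> M \<Longrightarrow> y \<in> M \<Longrightarrow> cycle_E n m x \<Longrightarrow> cycle_E n m y \<Longrightarrow> x = y"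
  proof (rule ccontr)
    fix m x y assume a: "m \<in> M" "x \<in> M" "y \<in> M" "cycle_E n m x" "cycle_E n m y" "x \<noteq> y"
    have mx: "m \<noteq> x" "m \<noteq> y" using a(4,5) E sne by metis+
    have "{m,x} \<in> induced_edges (cycle_E n) M" "{m,y} \<in> induced_edges (cycle_E n) M"
      unfolding induced_edges_def using a by blast+
    moreover have "{m,x} \<noteq> {m,y}" using a(6) mx by (auto simp: doubleton_eq_iff)
    ultimately have "{m,x} \<inter> {m,y} = {}" using disj by blast
    then show False by auto
  qed
  have out: "\<And>m. m \<in> M \<Longrightarrow> \<exists>w. w < n \<and> w \<notin> M \<and> cycle_E n m w"
  proof -
    fix m assume m: "m \<in> M"
    have mn: "m < n" using MV' m .
    obtain p where p: "p < n" "s p = m"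
    proof (cases "m = 0")
      case True then show ?thesis using that[of "n-1"] n3 unfolding s_def by auto
    next
      case False then show ?thesis using that[of "m-1"] mn unfolding s_def by auto
    qed
    have e1: "cycle_E n m (s m)" "cycle_E n m p" using E mn sV p by auto
    have "s m \<noteq> p" using ss p by metis
    then have "s m \<notin> M \<or> p \<notin> M" using uniq[OF m _ _ e1] by blast
    then show "\<exists>w. w < n \<and> w \<notin> M \<and> cycle_E n m w" using e1 sV mn p by blast
  qed
  have cover: "is_cover (cycle_V n) (cycle_E n) M"
  proof -
    define A where "A = {v \<in> M. s v \<in> M}"
    have ie: "induced_edges (cycle_E n) M = (\<lambda>v. {v, s v}) ` A"
    proof
      show "induced_edges (cycle_E n) M \<subseteq> (\<lambda>v. {v, s v}) ` A"
      proof
        fix e assume "e \<in> induced_edges (cycle_E n) M"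
        then obtain u v where uv: "e = {u,v}" "u \<in> M" "v \<in> M" "cycle_E n u v"
          unfolding induced_edges_def by blast
        then have "v = s u \<or> u = s v" using E by blast
        then show "e \<in> (\<lambda>v. {v, s v}) ` A"
        proof
          assume "v = s u" then show ?thesis using uv unfolding A_def by blast
        next
          assume "u = s v" then show ?thesis using uv unfolding A_def by blast
        qed
      qed
      show "(\<lambda>v. {v, s v}) ` A \<subseteq> induced_edges (cycle_E n) M"
        unfolding A_def induced_edges_def using E MV' sV by blast
    qed
    have injA: "inj_on (\<lambda>v. {v, s v}) A"
    proof
      fix a b assume a: "a \<in> A" "b \<in> A" and e: "{a, s a} = {b, s b}"
      have an: "a < n" "b < n" using a MV' unfolding A_def by auto
      show "a = b"
      proof (rule ccontr)
        assume "a \<noteq> b"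
        then have "a = s b" "b = s a" using e by (auto simp: doubleton_eq_iff)
        then show False using ss an by metis
      qed
    qed
    have finA: "finite A" unfolding A_def using MV' by (auto intro: finite_subset[of _ "{..<n}"])
    have cA: "card A = k"
      using im card_image[OF injA] unfolding ie[symmetric] induces_matching_def n_def by simp
    define h where "h = (\<lambda>v. s (s v))"
    let ?C = "cycle_V n - M"
    have hA: "h ` A \<subseteq> ?C"
    proof
      fix w assume "w \<in> h ` A"
      then obtain v where v: "v \<in> A" "w = s (s v)" unfolding h_def by blast
      have vn: "v < n" "s v < n" "v \<in> M" "s v \<in> M" using v MV' sV unfolding A_def by auto
      have "cycle_E n (s v) v" "cycle_E n (s v) (s (s v))" using E vn sV by auto
      then have "s (s v) \<notin> M" using uniq[OF vn(4) vn(3)] ss[OF vn(1)] by metis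
      then show "w \<in> ?C" using v vn sV unfolding cycle_V_def by auto
    qed
    have injh: "inj_on h A"
      unfolding h_def inj_on_def A_def using sinj sV MV' by auto
    have cC: "card ?C = k"
      using card_Diff_subset[of M "cycle_V n"] MV cM MV' unfolding cycle_V_def n_def
      by (simp add: finite_subset)
    have hC: "h ` A = ?C"
      by (rule card_subset_eq) (use hA cC card_image[OF injh] cA in \<open>auto simp: cycle_V_def\<close>)
    show ?thesis unfolding is_cover_def
    proof (intro conjI ballI impI)
      show "M \<subseteq> cycle_V n" using MV unfolding n_def .
      fix u v assume uv: "u \<in> cycle_V n" "v \<in> cycle_V n" "cycle_E n u v"
      have key: "\<And>a. a < n \<Longrightarrow> s a \<notin> M \<Longrightarrow> a \<in> M"
      proof -
        fix a assume a: "a < n" "s a \<notin> M"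
        then have "s a \<in> ?C" using sV unfolding cycle_V_def by auto
        then obtain v where v: "v \<in> A" "s a = s (s v)" using hC unfolding h_def by blast
        then have "a = s v" using sinj a sV MV' unfolding A_def by auto
        then show "a \<in> M" using v unfolding A_def by auto
      qed
      show "u \<in> M \<or> v \<in> M" using uv E key by metis
    qed
  qed
  show ?thesis
  proof
    show "is_cover (cycle_V (3*k)) (cycle_E (3*k)) M" using cover unfolding n_def .
    show "\<forall>W :: nat \<Rightarrow> nat set. (\<forall>i\<in>{1..2*k-1}. W i = M) \<longrightarrow>
               \<not> (\<exists>S f. S \<subseteq> {1..2*k-1} \<and> (\<forall>i\<in>S. f i \<in> W i)
                        \<and> is_cover (cycle_V (3*k)) (cycle_E (3*k)) (f ` S))"
    proof (intro allI impI notI)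
      fix W :: "nat \<Rightarrow> nat set"
      assume W: "\<forall>i\<in>{1..2*k-1}. W i = M"
        and "\<exists>S f. S \<subseteq> {1..2*k-1} \<and> (\<forall>i\<in>S. f i \<in> W i) \<and> is_cover (cycle_V (3*k)) (cycle_E (3*k)) (f ` S)"
      then obtain S f where S: "S \<subseteq> {1..2*k-1}" "\<forall>i\<in>S. f i \<in> W i"
        and C: "is_cover (cycle_V n) (cycle_E n) (f ` S)" unfolding n_def by blast
      have fM: "f ` S \<subseteq> M" using S W by auto
      have "M \<subseteq> f ` S"
      proof
        fix m assume m: "m \<in> M"
        obtain w where w: "w < n" "w \<notin> M" "cycle_E n m w" using out[OF m] by blast
        have "m \<in> f ` S \<or> w \<in> f ` S" using C w MV' m unfolding is_cover_def cycle_V_def by auto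
        then show "m \<in> f ` S" using fM w by blast
      qed
      have "2*k \<le> card (f ` S)" using card_mono[OF _ \<open>M \<subseteq> f ` S\<close>] cM finite_subset[OF S(1)]
        by auto
      also have "\<dots> \<le> card S" using finite_subset[OF S(1)] card_image_le by auto
      also have "\<dots> \<le> 2*k-1" using card_mono[OF _ S(1)] by auto
      finally show False using k by simp
    qed
  qed
qed

theorem mainTheorem8:
  fixes k :: nat
  assumes "k \<ge> 2"
  shows "igamma (cycle_V (3*k)) (cycle_E (3*k)) = k
    \<and> card (cycle_V (3*k)) - igamma (cycle_V (3*k)) (cycle_E (3*k)) = 2*k
    \<and> (\<forall>M. M \<subseteq> cycle_V (3*k) \<and> card M = 2*k \<and> induces_matching (cycle_V (3*k)) (cycle_E (3*k)) M k \<longrightarrow>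
          is_cover (cycle_V (3*k)) (cycle_E (3*k)) M
          \<and> (\<forall>W :: nat \<Rightarrow> nat set. (\<forall>i\<in>{1..2*k-1}. W i = M) \<longrightarrow>
               \<not> (\<exists>S f. S \<subseteq> {1..2*k-1} \<and> (\<forall>i\<in>S. f i \<in> W i)
                        \<and> is_cover (cycle_V (3*k)) (cycle_E (3*k)) (f ` S))))"
  using igam[OF assms] matching_part[OF assms] by (simp add: cycle_V_def) blast

end
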